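(* Let $2\leq k<n$ and let $K\subset\mathbb{C}^n$ be a convex body such that for every complex $k$-dimensional linear subspace $P\subset\mathbb{C}^n$, the orthogonal projection of $K$ onto $P$ is symmetric. Then $K$ is symmetric.
   Context: A convex body is a compact convex subset of $\mathbb{C}^n$ with nonempty interior. $\mathbb{S}^1=\{\xi\in\mathbb{C}:|\xi|=1\}$. A set $A\subset\mathbb{C}^n$ is called symmetric if there is a translated copy $A'=A-x_0$ of $A$ such that $\xi A'=A'$ for every $\xi\in\mathbb{S}^1$. Orthogonal projections are with respect to the standard Hermitian inner product on $\mathbb{C}^n$. *)

theory Defs
  imports "HOL-Analysis.Analysis"
begin

text \<open>C^n is modelled as complex ^ 'n with n = CARD('n).\<close>

definition herm_inner :: "complex ^ 'n \<Rightarrow> complex ^ 'n \<Rightarrow> complex" where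
  "herm_inner x y = (\<Sum>i\<in>UNIV. x $ i * cnj (y $ i))"

definition orth_proj :: "(complex ^ 'n) set \<Rightarrow> complex ^ 'n \<Rightarrow> complex ^ 'n" where
  "orth_proj P x = (THE p. p \<in> P \<and> (\<forall>q\<in>P. herm_inner (x - p) q = 0))"

definition convex_body :: "(complex ^ 'n) set \<Rightarrow> bool" where
  "convex_body K \<longleftrightarrow> compact K \<and> convex K \<and> interior K \<noteq> {}"

definition symmetric_set :: "(complex ^ 'n) set \<Rightarrow> bool" where
  "symmetric_set A \<longleftrightarrow> (\<exists>x0. \<forall>\<xi>::complex. norm \<xi> = 1 \<longrightarrow>
      (\<lambda>a. \<xi> *s a) ` ((\<lambda>a. a - x0) ` A) = (\<lambda>a. a - x0) ` A)"

end

theory Submission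
  imports Defs
begin

lemma hi_add_left: "herm_inner (x + y) z = herm_inner x z + herm_inner y z"
  by (simp add: herm_inner_def sum.distrib algebra_simps)
lemma hi_diff_left: "herm_inner (x - y) z = herm_inner x z - herm_inner y z"
  by (simp add: herm_inner_def sum_subtractf algebra_simps)
lemma hi_smult_left: "herm_inner (c *s x) z = c * herm_inner x z"
  by (simp add: herm_inner_def sum_distrib_left algebra_simps)
lemma hi_add_right: "herm_inner x (y + z) = herm_inner x y + herm_inner x z"
  by (simp add: herm_inner_def sum.distrib algebra_simps)
lemma hi_smult_right: "herm_inner x (c *s y) = cnj c * herm_inner x y"
  by (simp add: herm_inner_def sum_distrib_left algebra_simps)
lemma hi_cnj: "herm_inner x y = cnj (herm_inner y x)"
  by (simp add: herm_inner_def mult.commute)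
lemma hi_zero_left[simp]: "herm_inner 0 y = 0"
  by (simp add: herm_inner_def)
lemma hi_self_zero: assumes "herm_inner x x = 0" shows "x = 0"
proof -
  have "herm_inner x x = (\<Sum>i\<in>UNIV. complex_of_real ((norm (x$i))^2))"
    by (simp add: herm_inner_def flip: complex_norm_square)
  also have "\<dots> = complex_of_real (\<Sum>i\<in>UNIV. (norm (x$i))^2)"
    by (simp only: of_real_sum)
  finally have "(\<Sum>i\<in>UNIV. (norm (x$i))^2) = 0" using assms by (metis of_real_eq_0_iff)
  then have "\<forall>i\<in>UNIV. (norm (x$i))^2 = 0"
    by (subst (asm) sum_nonneg_eq_0_iff) auto
  then show ?thesis by (simp add: vec_eq_iff)
qed
lemma inner_hi: "inner a (z::complex^'n) = Re (herm_inner z a)"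
  by (simp add: inner_vec_def herm_inner_def Re_sum inner_complex_def mult.commute)

lemma scaleR_smult: "(r::real) *\<^sub>R (x::complex^'n) = complex_of_real r *s x"
  unfolding vec_eq_iff vector_scaleR_component vector_smult_component by (simp add: scaleR_conv_of_real)

lemma orth_proj_prop:
  assumes P: "vec.subspace (P :: (complex^'n) set)"
  shows "orth_proj P x \<in> P \<and> (\<forall>q\<in>P. herm_inner (x - orth_proj P x) q = 0)"
proof -
  have rs: "subspace P"
    using P unfolding subspace_def vec.subspace_def by (auto simp: scaleR_smult)
  obtain y z where y: "y \<in> span P" and z: "\<And>w. w \<in> span P \<Longrightarrow> orthogonal z w" and xyz: "x = y + z"
    using orthogonal_subspace_decomp_exists[of P x] by metis
  have yP: "y \<in> P" using y rs by (metis span_eq_iff)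
  have ex: "\<forall>q\<in>P. herm_inner (x - y) q = 0"
  proof
    fix q assume q: "q \<in> P"
    have iq: "\<i> *s q \<in> P" using P q by (simp add: vec.subspace_scale)
    have "q \<in> span P" "\<i> *s q \<in> span P" using q iq span_superset by blast+
    then have "inner z q = 0" using z[of q] orthogonal_def by metis
    then have 1: "Re (herm_inner q z) = 0" by (simp add: inner_hi)
    have "inner z (\<i> *s q) = 0" using z[of "\<i> *s q"] \<open>\<i> *s q \<in> span P\<close> orthogonal_def by metis
    then have 2: "Im (herm_inner q z) = 0" by (simp add: inner_hi hi_smult_left)
    have "herm_inner q z = 0" using 1 2 complex_eqI by auto
    then show "herm_inner (x - y) q = 0" using xyz by (simp add: hi_cnj[of z q])
  qed
  have uq: "p = y" if "p \<in> P" "\<forall>q\<in>P. herm_inner (x - p) q = 0" for p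
  proof -
    have dP: "p - y \<in> P" using P that(1) yP by (simp add: vec.subspace_diff)
    have "herm_inner (x - y) (p - y) - herm_inner (x - p) (p - y) = 0"
      using that(2) ex dP by auto
    then have "herm_inner (p - y) (p - y) = 0"
      by (simp add: hi_diff_left[symmetric] algebra_simps)
    then have "p - y = 0" by (rule hi_self_zero)
    then show ?thesis by simp
  qed
  have "\<exists>!p. p \<in> P \<and> (\<forall>q\<in>P. herm_inner (x - p) q = 0)"
    using yP ex uq by blast
  then show ?thesis unfolding orth_proj_def by (rule theI')
qed


lemma unit_cnj: "norm (\<xi>::complex) = 1 \<Longrightarrow> cnj \<xi> * \<xi> = 1"
  by (metis complex_norm_square mult.commute of_real_1 power_one)

definition symc :: "complex set \<Rightarrow> complex \<Rightarrow> bool" where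
  "symc S c \<longleftrightarrow> (\<forall>\<xi>. norm \<xi> = 1 \<longrightarrow> (\<forall>s\<in>S. c + \<xi> * (s - c) \<in> S))"

definition symv :: "(complex^'n) set \<Rightarrow> complex^'n \<Rightarrow> bool" where
  "symv A c \<longleftrightarrow> (\<forall>\<xi>. norm \<xi> = 1 \<longrightarrow> (\<forall>a\<in>A. c + \<xi> *s (a - c) \<in> A))"

lemma symmetric_set_iff: "symmetric_set A \<longleftrightarrow> (\<exists>x0. symv A x0)"
proof -
  have "(\<forall>\<xi>::complex. norm \<xi> = 1 \<longrightarrow>
      (\<lambda>a. \<xi> *s a) ` ((\<lambda>a. a - x0) ` A) = (\<lambda>a. a - x0) ` A) \<longleftrightarrow> symv A x0" for x0
  proof
    assume H: "\<forall>\<xi>::complex. norm \<xi> = 1 \<longrightarrow>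
      (\<lambda>a. \<xi> *s a) ` ((\<lambda>a. a - x0) ` A) = (\<lambda>a. a - x0) ` A"
    show "symv A x0" unfolding symv_def
    proof (intro allI impI ballI)
      fix \<xi> :: complex and a assume "norm \<xi> = 1" "a \<in> A"
      then have "\<xi> *s (a - x0) \<in> (\<lambda>a. a - x0) ` A" using H by blast
      then obtain b where "b \<in> A" "\<xi> *s (a - x0) = b - x0" by blast
      then show "x0 + \<xi> *s (a - x0) \<in> A" by simp
    qed
  next
    assume H: "symv A x0"
    show "\<forall>\<xi>::complex. norm \<xi> = 1 \<longrightarrow>
      (\<lambda>a. \<xi> *s a) ` ((\<lambda>a. a - x0) ` A) = (\<lambda>a. a - x0) ` A"
    proof (intro allI impI equalityI subsetI)
      fix \<xi> :: complex and y assume n: "norm \<xi> = 1" and "y \<in> (\<lambda>a. \<xi> *s a) ` ((\<lambda>a. a - x0) ` A)"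
      then obtain a where a: "a \<in> A" "y = \<xi> *s (a - x0)" by blast
      then have "x0 + \<xi> *s (a - x0) \<in> A" using H n unfolding symv_def by blast
      then show "y \<in> (\<lambda>a. a - x0) ` A" using a by (auto intro!: image_eqI[where x="x0 + \<xi> *s (a - x0)"])
    next
      fix \<xi> :: complex and y assume n: "norm \<xi> = 1" and "y \<in> (\<lambda>a. a - x0) ` A"
      then obtain b where b: "b \<in> A" "y = b - x0" by blast
      have n': "norm (cnj \<xi>) = 1" using n by simp
      have b': "x0 + cnj \<xi> *s (b - x0) \<in> A" using H n' b unfolding symv_def by blast
      have "\<xi> *s ((x0 + cnj \<xi> *s (b - x0)) - x0) = (\<xi> * cnj \<xi>) *s (b - x0)"
        by (simp add: vector_smult_assoc)
      also have "\<dots> = y" using unit_cnj[OF n] b by (simp add: mult.commute)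
      finally show "y \<in> (\<lambda>a. \<xi> *s a) ` ((\<lambda>a. a - x0) ` A)" using b' by (metis image_eqI)
    qed
  qed
  then show ?thesis unfolding symmetric_set_def by blast
qed

lemma symc_unique:
  assumes "bounded S" "S \<noteq> {}" "symc S a" "symc S b"
  shows "a = b"
proof (rule ccontr)
  assume ne: "a \<noteq> b"
  obtain s where s: "s \<in> S" using assms(2) by blast
  obtain B where B: "\<And>x. x \<in> S \<Longrightarrow> norm x \<le> B" using assms(1) bounded_iff by blast
  have m1: "norm (-1::complex) = 1" by simp
  have step: "t + 2 * (b - a) \<in> S" if "t \<in> S" for t
  proof -
    have "a + (-1) * (t - a) \<in> S" using assms(3) that m1 unfolding symc_def by blast
    then have "b + (-1) * ((a + (-1) * (t - a)) - b) \<in> S" using assms(4) m1 unfolding symc_def by blast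
    moreover have "b + (-1) * ((a + (-1) * (t - a)) - b) = t + 2 * (b - a)" by (simp add: algebra_simps)
    ultimately show ?thesis by metis
  qed
  have it: "s + of_nat n * (2 * (b - a)) \<in> S" for n
  proof (induction n)
    case 0 then show ?case using s by simp
  next
    case (Suc n) then show ?case using step[OF Suc] by (simp add: algebra_simps)
  qed
  define d where "d = norm (2 * (b - a))"
  have d: "d > 0" using ne unfolding d_def by simp
  obtain n :: nat where n: "real n > (B + norm s) / d" using reals_Archimedean2 by blast
  have "real n * d = norm (of_nat n * (2 * (b - a)))" unfolding d_def by (simp add: norm_mult)
  also have "\<dots> \<le> norm (s + of_nat n * (2 * (b - a))) + norm s"
    by (metis add_diff_cancel_left' norm_triangle_ineq4 add.commute)
  also have "\<dots> \<le> B + norm s" using B[OF it[of n]] by simp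
  finally have "real n * d \<le> B + norm s" .
  then show False using n d by (simp add: field_simps)
qed

lemma extend_subspace:
  fixes T :: "(complex^'n) set"
  assumes "vec.subspace T" "vec.dim T \<le> m" "m \<le> CARD('n)"
  shows "\<exists>P. vec.subspace P \<and> T \<subseteq> P \<and> vec.dim P = m"
  using assms
proof (induction "m - vec.dim T" arbitrary: T)
  case 0 then show ?case by auto
next
  case (Suc d)
  have lt: "vec.dim T < CARD('n)" using Suc by linarith
  obtain y where y: "y \<notin> T"
  proof -
    have "T \<noteq> UNIV" using lt vec_dim_card[where 'a=complex and 'n='n] by auto
    then show ?thesis using that by blast
  qed
  define T' where "T' = vec.span (insert y T)"
  have sT: "vec.span T = T" using Suc.prems(1) by (simp add: vec.span_eq_iff)
  have dT': "vec.dim T' = vec.dim T + 1"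
    unfolding T'_def vec.dim_span using y sT by (simp add: vec.dim_insert del: vec.span_eq_iff)
  have "\<exists>P. vec.subspace P \<and> T' \<subseteq> P \<and> vec.dim P = m"
    using Suc.hyps(1)[of T'] Suc.hyps(2) Suc.prems dT' unfolding T'_def
    by (simp add: vec.subspace_span)
  moreover have "T \<subseteq> T'" unfolding T'_def by (meson subset_insertI vec.span_superset subset_trans)
  ultimately show ?case by blast
qed


lemma symv_image:
  assumes "symv A x0"
  shows "symc ((\<lambda>y. herm_inner y u) ` A) (herm_inner x0 u)"
  unfolding symc_def
proof (intro allI impI ballI)
  fix \<xi> :: complex and s assume n: "norm \<xi> = 1" and "s \<in> (\<lambda>y. herm_inner y u) ` A"
  then obtain a where a: "a \<in> A" "s = herm_inner a u" by blast
  have "x0 + \<xi> *s (a - x0) \<in> A" using assms n a unfolding symv_def by blast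
  moreover have "herm_inner (x0 + \<xi> *s (a - x0)) u = herm_inner x0 u + \<xi> * (s - herm_inner x0 u)"
    using a by (simp add: hi_add_left hi_smult_left hi_diff_left right_diff_distrib)
  ultimately show "herm_inner x0 u + \<xi> * (s - herm_inner x0 u) \<in> (\<lambda>y. herm_inner y u) ` A"
    by (metis image_eqI)
qed

lemma proj_image:
  assumes "vec.subspace P" "u \<in> P"
  shows "(\<lambda>y. herm_inner y u) ` (orth_proj P ` K) = (\<lambda>y. herm_inner y u) ` K"
proof -
  have "herm_inner (orth_proj P y) u = herm_inner y u" for y
  proof -
    have "herm_inner (y - orth_proj P y) u = 0" using orth_proj_prop[OF assms(1)] assms(2) by blast
    then show ?thesis by (simp add: hi_diff_left)
  qed
  then show ?thesis by (simp add: image_image)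
qed

lemma exists_P2:
  fixes u v :: "complex^'n"
  assumes "2 \<le> k" "k \<le> CARD('n)"
  shows "\<exists>P. vec.subspace P \<and> u \<in> P \<and> v \<in> P \<and> vec.dim P = k"
proof -
  define T where "T = vec.span {u, v}"
  have "vec.dim T \<le> card {u, v}" unfolding T_def vec.dim_span
    by (rule vec.dim_le_card) (auto intro: vec.span_base[where 'a=complex and 'b='n])
  also have "\<dots> \<le> 2" by (simp add: card_insert_if)
  finally have "vec.dim T \<le> k" using assms by linarith
  then obtain P where "vec.subspace P" "T \<subseteq> P" "vec.dim P = k"
    using extend_subspace[of T k] assms unfolding T_def by (auto simp: vec.subspace_span)
  moreover have "u \<in> T" "v \<in> T" unfolding T_def by (meson insertI1 insertI2 vec.span_base)+
  ultimately show ?thesis by blast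
qed

lemma cont_hi: "continuous_on A (\<lambda>y. herm_inner y u)"
  unfolding herm_inner_def by (intro continuous_intros)


theorem theorem2p6:
  fixes K :: "(complex ^ 'n) set" and k :: nat
  assumes "2 \<le> k" and "k < CARD('n)"
    and "convex_body K"
    and "\<And>P. vec.subspace P \<Longrightarrow> vec.dim P = k \<Longrightarrow> symmetric_set (orth_proj P ` K)"
  shows "symmetric_set K"
proof -
  have cK: "compact K" "convex K" and neK: "K \<noteq> {}"
    using assms(3) unfolding convex_body_def by (auto dest: interior_subset[THEN subset_antisym[rotated]])
  define S where "S u = (\<lambda>y. herm_inner y u) ` K" for u
  have bS: "bounded (S u)" for u
    unfolding S_def by (rule compact_imp_bounded, rule compact_continuous_image[OF cont_hi cK(1)])
  have neS: "S u \<noteq> {}" for u using neK unfolding S_def by blast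
  have hyp: "\<exists>x0. symv (orth_proj P ` K) x0" if "vec.subspace P" "vec.dim P = k" for P
    using assms(4)[OF that] symmetric_set_iff by blast
  define m where "m u = (SOME c. symc (S u) c)" for u
  have mP: "m u = herm_inner x0 u"
    if P: "vec.subspace P" "symv (orth_proj P ` K) x0" "u \<in> P" for P x0 u
  proof -
    have h: "symc (S u) (herm_inner x0 u)"
      using symv_image[OF P(2), of u] proj_image[OF P(1) P(3), of K] unfolding S_def by simp
    then have "symc (S u) (m u)" unfolding m_def by (rule someI)
    then show ?thesis using symc_unique[OF bS neS h] by simp
  qed
  have ex2: "\<exists>P. vec.subspace P \<and> u \<in> P \<and> v \<in> P \<and> vec.dim P = k" for u v :: "complex^'n"
    using exists_P2[of k u v] assms(1,2) by simp
  have lin: "m (a *s u + b *s v) = cnj a * m u + cnj b * m v" for a b u v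
  proof -
    obtain P where P: "vec.subspace P" "u \<in> P" "v \<in> P" "vec.dim P = k" using ex2 by blast
    obtain x0 where x0: "symv (orth_proj P ` K) x0" using hyp P(1,4) by blast
    have w: "a *s u + b *s v \<in> P" using P by (simp add: vec.subspace_add vec.subspace_scale)
    show ?thesis using mP[OF P(1) x0 w] mP[OF P(1) x0 P(2)] mP[OF P(1) x0 P(3)]
      by (simp add: hi_add_right hi_smult_right)
  qed
  have symm: "symc (S u) (m u)" for u
  proof -
    obtain P where P: "vec.subspace P" "u \<in> P" "u \<in> P" "vec.dim P = k" using ex2 by blast
    obtain x0 where x0: "symv (orth_proj P ` K) x0" using hyp P(1,4) by blast
    have h: "symc (S u) (herm_inner x0 u)"
      using symv_image[OF x0, of u] proj_image[OF P(1) P(2), of K] unfolding S_def by simp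
    then show ?thesis unfolding m_def by (rule someI)
  qed
  have m0: "m 0 = 0" using lin[of 0 0 0 0] by simp
  have msum: "finite F \<Longrightarrow> m (\<Sum>i\<in>F. c i *s w i) = (\<Sum>i\<in>F. cnj (c i) * m (w i))" for F c w
  proof (induction F rule: finite_induct)
    case empty then show ?case using m0 by simp
  next
    case (insert x F)
    then show ?case using lin[of "c x" "w x" 1 "\<Sum>i\<in>F. c i *s w i"] by simp
  qed
  define x0 where "x0 = (\<chi> i. m (axis i 1))"
  have hx0: "herm_inner x0 u = m u" for u
  proof -
    have "m u = m (\<Sum>i\<in>UNIV. (u$i) *s axis i 1)" by (simp add: basis_expansion)
    also have "\<dots> = (\<Sum>i\<in>UNIV. cnj (u$i) * m (axis i 1))" by (rule msum) simp
    also have "\<dots> = herm_inner x0 u" unfolding herm_inner_def x0_def by (simp add: mult.commute)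
    finally show ?thesis by simp
  qed
  have "symv K x0" unfolding symv_def
  proof (intro allI impI ballI)
    fix \<xi> :: complex and x assume n: "norm \<xi> = 1" and x: "x \<in> K"
    show "x0 + \<xi> *s (x - x0) \<in> K"
    proof (rule ccontr)
      assume "x0 + \<xi> *s (x - x0) \<notin> K"
      then obtain a b where ab: "inner a (x0 + \<xi> *s (x - x0)) < b" "\<forall>x\<in>K. inner a x > b"
        using separating_hyperplane_closed_point[OF cK(2) compact_imp_closed[OF cK(1)]] by blast
      have "herm_inner (x0 + \<xi> *s (x - x0)) a = m a + \<xi> * (herm_inner x a - m a)"
        using hx0[of a] by (simp add: hi_add_left hi_smult_left hi_diff_left right_diff_distrib)
      also have "\<dots> \<in> S a" using symm[of a] n x unfolding symc_def S_def by blast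
      finally obtain x' where x': "x' \<in> K" "herm_inner (x0 + \<xi> *s (x - x0)) a = herm_inner x' a"
        unfolding S_def by blast
      then have "inner a (x0 + \<xi> *s (x - x0)) = inner a x'" by (simp add: inner_hi)
      then show False using ab x' by force
    qed
  qed
  then show ?thesis using symmetric_set_iff by blast
qed

end
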